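(* Let $n=n_{obs}+n_{mis}$ with $n_{obs}\ge2$, $n_{mis}\ge1$, and let $D\ge2$. Let $Y_1,\dots,Y_{n_{obs}}$ be i.i.d. $N(\mu,\sigma^2)$, with $\bar Y_{obs}$ their mean and $CSS=\sum_{i=1}^{n_{obs}}(Y_i-\bar Y_{obs})^2$. Fix a real $\nu_{prior}$ with $n_{obs}+\nu_{prior}>3$ and set $\nu_{PD}=\nu_{prior}+n_{obs}-1$. For each $d=1,\dots,D$, independently, draw $U_{PD,d}\sim\chi^2_{\nu_{PD}}$ and $Z_{PD,d}\sim N(0,1/n_{obs})$, set $\hat\sigma^2_{d}=CSS/U_{PD,d}$, $\hat\mu_d=\bar Y_{obs}+\hat\sigma_d Z_{PD,d}$, draw $Y_{imp,i,d}=\hat\mu_d+\hat\sigma_d Z_{imp,i,d}$ for $i=n_{obs}+1,\dots,n$ with $Z_{imp,i,d}$ i.i.d. $N(0,1)$ (all random variables independent of each other and of the data), and let $\hat\mu_{SI,d}$ and $\hat\sigma^2_{SI,d}$ be the sample mean and sample variance (divisor $n-1$) of the $n$ values $Y_1,\dots,Y_{n_{obs}},Y_{imp,n_{obs}+1,d},\dots,Y_{imp,n,d}$. Let $\hat\mu_{MI,PD}=\frac1D\sum_d\hat\mu_{SI,d}$, $\hat\sigma^2_{MI,PD}=\frac1D\sum_d\hat\sigma^2_{SI,d}$, and define Rubin's variance estimate $$\hat V(\hat\mu_{MI,PD})=\frac{\hat\sigma^2_{MI,PD}}{n}+\frac{D+1}{D(D-1)}\sum_{d=1}^D(\hat\mu_{SI,d}-\hat\mu_{MI,PD})^2.$$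 Then $$E\big(\hat V(\hat\mu_{MI,PD})\big)-\operatorname{Var}(\hat\mu_{MI,PD})=-\sigma^2\frac{n_{mis}(n+n_{obs}-1)(\nu_{prior}-2)}{(n-1)n\,n_{obs}(n_{obs}+\nu_{prior}-3)}=\frac{n+n_{obs}-1}{n\,n_{obs}}\Big(E(\hat\sigma^2_{MI,PD})-\sigma^2\Big).$$ In particular $\hat V(\hat\mu_{MI,PD})$ is unbiased for $\operatorname{Var}(\hat\mu_{MI,PD})$ if and only if $\nu_{prior}=2$. *)

theory Defs
  imports "HOL-Probability.Probability"
begin

definition chi_squared_density :: "real \<Rightarrow> real \<Rightarrow> real" where
  "chi_squared_density k x =
     (if x > 0 then x powr (k / 2 - 1) * exp (- x / 2) / (2 powr (k / 2) * Gamma (k / 2)) else 0)"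

text \<open>Labels of all primitive random variables (0-based indices):
  Yobs i (i < n_obs): observed data; Uchi d, ZPD d (d < D): posterior draws;
  Zimp i d (n_obs \<le> i < n, d < D): imputation noise.\<close>
datatype rv_label = Yobs nat | Uchi nat | ZPD nat | Zimp nat nat

definition rv_index :: "nat \<Rightarrow> nat \<Rightarrow> nat \<Rightarrow> rv_label set" where
  "rv_index nobs nmis D =
     {Yobs i | i. i < nobs} \<union> {Uchi d | d. d < D} \<union> {ZPD d | d. d < D} \<union>
     {Zimp i d | i d. nobs \<le> i \<and> i < nobs + nmis \<and> d < D}"

definition Ybar_obs :: "(rv_label \<Rightarrow> 'a \<Rightarrow> real) \<Rightarrow> nat \<Rightarrow> 'a \<Rightarrow> real" where
  "Ybar_obs X nobs \<omega> = (\<Sum>i<nobs. X (Yobs i) \<omega>) / real nobs"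

definition CSS :: "(rv_label \<Rightarrow> 'a \<Rightarrow> real) \<Rightarrow> nat \<Rightarrow> 'a \<Rightarrow> real" where
  "CSS X nobs \<omega> = (\<Sum>i<nobs. (X (Yobs i) \<omega> - Ybar_obs X nobs \<omega>)\<^sup>2)"

definition sigma2_hat :: "(rv_label \<Rightarrow> 'a \<Rightarrow> real) \<Rightarrow> nat \<Rightarrow> nat \<Rightarrow> 'a \<Rightarrow> real" where
  "sigma2_hat X nobs d \<omega> = CSS X nobs \<omega> / X (Uchi d) \<omega>"

definition mu_hat :: "(rv_label \<Rightarrow> 'a \<Rightarrow> real) \<Rightarrow> nat \<Rightarrow> nat \<Rightarrow> 'a \<Rightarrow> real" where
  "mu_hat X nobs d \<omega> = Ybar_obs X nobs \<omega> + sqrt (sigma2_hat X nobs d \<omega>) * X (ZPD d) \<omega>"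

definition Y_imp :: "(rv_label \<Rightarrow> 'a \<Rightarrow> real) \<Rightarrow> nat \<Rightarrow> nat \<Rightarrow> nat \<Rightarrow> 'a \<Rightarrow> real" where
  "Y_imp X nobs i d \<omega> = mu_hat X nobs d \<omega> + sqrt (sigma2_hat X nobs d \<omega>) * X (Zimp i d) \<omega>"

definition Y_comp :: "(rv_label \<Rightarrow> 'a \<Rightarrow> real) \<Rightarrow> nat \<Rightarrow> nat \<Rightarrow> nat \<Rightarrow> 'a \<Rightarrow> real" where
  "Y_comp X nobs i d \<omega> = (if i < nobs then X (Yobs i) \<omega> else Y_imp X nobs i d \<omega>)"

definition mu_SI :: "(rv_label \<Rightarrow> 'a \<Rightarrow> real) \<Rightarrow> nat \<Rightarrow> nat \<Rightarrow> nat \<Rightarrow> 'a \<Rightarrow> real" where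
  "mu_SI X nobs nmis d \<omega> = (\<Sum>i<nobs + nmis. Y_comp X nobs i d \<omega>) / real (nobs + nmis)"

definition sigma2_SI :: "(rv_label \<Rightarrow> 'a \<Rightarrow> real) \<Rightarrow> nat \<Rightarrow> nat \<Rightarrow> nat \<Rightarrow> 'a \<Rightarrow> real" where
  "sigma2_SI X nobs nmis d \<omega> =
     (\<Sum>i<nobs + nmis. (Y_comp X nobs i d \<omega> - mu_SI X nobs nmis d \<omega>)\<^sup>2) / (real (nobs + nmis) - 1)"

definition mu_MI :: "(rv_label \<Rightarrow> 'a \<Rightarrow> real) \<Rightarrow> nat \<Rightarrow> nat \<Rightarrow> nat \<Rightarrow> 'a \<Rightarrow> real" where
  "mu_MI X nobs nmis D \<omega> = (\<Sum>d<D. mu_SI X nobs nmis d \<omega>) / real D"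

definition sigma2_MI :: "(rv_label \<Rightarrow> 'a \<Rightarrow> real) \<Rightarrow> nat \<Rightarrow> nat \<Rightarrow> nat \<Rightarrow> 'a \<Rightarrow> real" where
  "sigma2_MI X nobs nmis D \<omega> = (\<Sum>d<D. sigma2_SI X nobs nmis d \<omega>) / real D"

definition V_Rubin :: "(rv_label \<Rightarrow> 'a \<Rightarrow> real) \<Rightarrow> nat \<Rightarrow> nat \<Rightarrow> nat \<Rightarrow> 'a \<Rightarrow> real" where
  "V_Rubin X nobs nmis D \<omega> =
     sigma2_MI X nobs nmis D \<omega> / real (nobs + nmis)
     + (real D + 1) / (real D * (real D - 1)) *
       (\<Sum>d<D. (mu_SI X nobs nmis d \<omega> - mu_MI X nobs nmis D \<omega>)\<^sup>2)"

end

theory Submission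
  imports Defs
begin


lemma chi_inv_moment:
  fixes k :: real
  assumes k: "k > 2"
  shows "has_bochner_integral lborel (\<lambda>x. chi_squared_density k x * \<bar>1/x\<bar>) (1/(k-2))"
proof -
  define a where "a = k/2 - 1"
  have a: "a > 0" using k by (simp add: a_def)
  define h where "h x = indicator {0..} x * x powr (a - 1) * exp (-x/2)" for x :: real
  define g where "g x = indicator {0..} x * x powr (a - 1) / exp x" for x :: real
  have gnn: "g x \<ge> 0" for x by (simp add: g_def indicator_def)
  have hm[measurable]: "h \<in> borel_measurable borel" unfolding h_def by measurable
  have h2: "h (2 * x) = 2 powr (a - 1) * g x" for x
  proof (cases "x \<ge> 0")
    case True
    then show ?thesis by (simp add: h_def g_def powr_mult exp_minus field_simps indicator_def)
  next
    case False
    then show ?thesis by (simp add: h_def g_def indicator_def)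
  qed
  have hh: "ennreal (h (2 * x)) = ennreal (2 powr (a - 1)) * ennreal (g x)" for x
    using h2[of x] gnn[of x] by (simp add: ennreal_mult)
  have "(\<integral>\<^sup>+x. ennreal (h x) \<partial>lborel) = ennreal \<bar>2::real\<bar> * (\<integral>\<^sup>+x. ennreal (h (0 + 2 * x)) \<partial>lborel)"
    by (rule nn_integral_real_affine[where c=2 and t=0]) auto
  also have "\<dots> = 2 * (\<integral>\<^sup>+x. ennreal (2 powr (a - 1)) * ennreal (g x) \<partial>lborel)"
    by (simp only: add_0_left hh abs_numeral ennreal_numeral)
  also have "\<dots> = 2 * (ennreal (2 powr (a - 1)) * (\<integral>\<^sup>+x. ennreal (g x) \<partial>lborel))"
    by (subst nn_integral_cmult) (auto simp: g_def)
  also have "(\<integral>\<^sup>+x. ennreal (g x) \<partial>lborel) = Gamma a"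
    using Gamma_conv_nn_integral_real[OF a] by (simp add: g_def)
  finally have H0: "(\<integral>\<^sup>+x. ennreal (h x) \<partial>lborel) = 2 * (ennreal (2 powr (a - 1)) * ennreal (Gamma a))" .
  have H: "(\<integral>\<^sup>+x. ennreal (h x) \<partial>lborel) = ennreal (2 powr a * Gamma a)"
    unfolding H0
  proof -
    have "2 * 2 powr (a - 1) = (2::real) powr a" by (simp add: powr_diff)
    moreover have "0 \<le> Gamma a" using Gamma_real_pos[OF a] by simp
    ultimately show "2 * (ennreal (2 powr (a - 1)) * ennreal (Gamma a)) = ennreal (2 powr a * Gamma a)"
      by (metis (no_types) ennreal_mult' ennreal_numeral mult.assoc powr_ge_zero zero_le_numeral ennreal_mult)
  qed
  define C where "C = 2 powr (k/2) * Gamma (k/2)"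
  have Cpos: "C > 0" using k by (simp add: C_def Gamma_real_pos)
  have eq: "chi_squared_density k x * \<bar>1/x\<bar> = h x / C" for x
  proof (cases "x > 0")
    case True
    have "x powr (k/2 - 1) / x = x powr (a - 1)"
    proof -
      have "x powr (a - 1) = x powr ((k/2 - 1) - 1)" by (simp add: a_def)
      also have "\<dots> = x powr (k/2 - 1) / x" using True by (simp only: powr_diff powr_one)
      finally show ?thesis by simp
    qed
    then show ?thesis using True
      by (simp add: chi_squared_density_def h_def C_def indicator_def field_simps)
  next
    case False
    then show ?thesis by (cases "x = 0") (simp_all add: chi_squared_density_def h_def indicator_def)
  qed
  have "(\<integral>\<^sup>+x. ennreal (chi_squared_density k x * \<bar>1/x\<bar>) \<partial>lborel)
      = (\<integral>\<^sup>+x. ennreal (1/C) * ennreal (h x) \<partial>lborel)"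
  proof (intro nn_integral_cong)
    fix x
    have "chi_squared_density k x * \<bar>1/x\<bar> = 1/C * h x" using eq[of x] by simp
    then show "ennreal (chi_squared_density k x * \<bar>1/x\<bar>) = ennreal (1/C) * ennreal (h x)"
      using Cpos by (simp only: ennreal_mult'[symmetric] less_imp_le divide_nonneg_pos zero_less_one)
  qed
  also have "\<dots> = ennreal (1/C) * ennreal (2 powr a * Gamma a)"
    by (subst nn_integral_cmult) (auto simp: H)
  also have "\<dots> = ennreal (1/(k-2))"
  proof -
    have G: "Gamma (k/2) = a * Gamma a" using Gamma_plus1[of a] a nonpos_Ints_nonpos[of a] by (force simp: a_def)
    have P: "2 powr (k/2) = 2 * 2 powr a" by (simp add: a_def powr_diff)
    have "1/C * (2 powr a * Gamma a) = 1/(k-2)"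
    proof -
      have g0: "Gamma ((k-2)/2) \<noteq> 0" proof -
        have "0 < (k-2)/2" using k by simp
        from Gamma_real_pos[OF this] show ?thesis by linarith
      qed
      show ?thesis using a Gamma_real_pos[OF a] g0 k by (simp add: C_def G P a_def field_simps)
    qed
    then show ?thesis using Cpos by (simp add: ennreal_mult'[symmetric])
  qed
  finally show ?thesis
    apply (intro has_bochner_integral_nn_integral)
    using k by (auto simp: chi_squared_density_def Gamma_real_pos intro!: AE_I2 )
qed


definition sd :: "(rv_label \<Rightarrow> 'b \<Rightarrow> real) \<Rightarrow> nat \<Rightarrow> nat \<Rightarrow> 'b \<Rightarrow> real" where
  "sd X p d \<omega> = sqrt (sigma2_hat X p d \<omega>)"
definition Wf :: "(rv_label \<Rightarrow> 'b \<Rightarrow> real) \<Rightarrow> nat \<Rightarrow> nat \<Rightarrow> nat \<Rightarrow> 'b \<Rightarrow> real" where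
  "Wf X p m d \<omega> = (real m * X (ZPD d) \<omega> + (\<Sum>i\<in>{p..<p+m}. X (Zimp i d) \<omega>)) / real (p+m)"
definition Rf :: "(rv_label \<Rightarrow> 'b \<Rightarrow> real) \<Rightarrow> nat \<Rightarrow> nat \<Rightarrow> nat \<Rightarrow> 'b \<Rightarrow> real" where
  "Rf X p m d \<omega> = (\<Sum>i\<in>{p..<p+m}. (X (ZPD d) \<omega> + X (Zimp i d) \<omega>)\<^sup>2)"

lemma split_sum: "(\<Sum>i<p+m::nat. f i) = (\<Sum>i<p. f i) + (\<Sum>i\<in>{p..<p+m}. (f i :: real))"
proof -
  have "{..<p+m} = {..<p} \<union> {p..<p+m}" by auto
  then show ?thesis by (metis finite_lessThan finite_atLeastLessThan sum.union_disjoint ivl_disj_int_one(2))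
qed

lemma sum_Yobs: "p > 0 \<Longrightarrow> (\<Sum>i<p. X (Yobs i) \<omega>) = real p * Ybar_obs X p \<omega>"
  by (simp add: Ybar_obs_def)

lemma pw_mu_SI:
  assumes "p > 0"
  shows "mu_SI X p m d \<omega> = Ybar_obs X p \<omega> + sd X p d \<omega> * Wf X p m d \<omega>"
proof -
  have "(\<Sum>i<p+m. Y_comp X p i d \<omega>) = (\<Sum>i<p. X (Yobs i) \<omega>) +
      (\<Sum>i\<in>{p..<p+m}. Ybar_obs X p \<omega> + sd X p d \<omega> * X (ZPD d) \<omega> + sd X p d \<omega> * X (Zimp i d) \<omega>)"
    unfolding split_sum by (simp add: Y_comp_def Y_imp_def mu_hat_def sd_def)
  also have "\<dots> = real (p+m) * Ybar_obs X p \<omega> + sd X p d \<omega> * (real m * X (ZPD d) \<omega> + (\<Sum>i\<in>{p..<p+m}. X (Zimp i d) \<omega>))"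
    using assms by (simp add: sum.distrib sum_Yobs sum_distrib_left[symmetric] algebra_simps)
  finally show ?thesis using assms by (simp add: mu_SI_def Wf_def field_simps)
qed

lemma sumsq_shift:
  fixes c :: "nat \<Rightarrow> real"
  assumes "N > 0"
  shows "(\<Sum>i<N. (c i - (\<Sum>j<N. c j)/N)\<^sup>2) = (\<Sum>i<N. (c i - y)\<^sup>2) - N * ((\<Sum>j<N. c j)/N - y)\<^sup>2"
proof -
  define mu where "mu = (\<Sum>j<N. c j)/N"
  have S: "(\<Sum>j<N. c j) = N * mu" using assms by (simp add: mu_def)
  have Z: "(\<Sum>i<N. c i - mu) = 0" by (simp add: sum_subtractf S)
  have "(\<Sum>i<N. (c i - y)\<^sup>2) = (\<Sum>i<N. (c i - mu)\<^sup>2 + (2 * (mu - y)) * (c i - mu) + (mu - y)\<^sup>2)"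
    by (rule sum.cong) (simp_all add: power2_eq_square algebra_simps)
  also have "\<dots> = (\<Sum>i<N. (c i - mu)\<^sup>2) + (2 * (mu - y)) * (\<Sum>i<N. c i - mu) + N * (mu - y)\<^sup>2"
    by (simp only: sum.distrib sum_distrib_left sum_constant card_lessThan)
  finally show ?thesis using Z by (simp add: mu_def)
qed

lemma pw_sigma2_SI:
  assumes "p > 0"
  shows "sigma2_SI X p m d \<omega> = (CSS X p \<omega> + (sd X p d \<omega>)\<^sup>2 * Rf X p m d \<omega>
            - real (p+m) * (sd X p d \<omega> * Wf X p m d \<omega>)\<^sup>2) / (real (p+m) - 1)"
proof -
  let ?c = "\<lambda>i. Y_comp X p i d \<omega>"
  let ?y = "Ybar_obs X p \<omega>"
  have mu: "mu_SI X p m d \<omega> = (\<Sum>j<p+m. ?c j)/(p+m)" by (simp add: mu_SI_def)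
  have "(\<Sum>i<p+m. (?c i - mu_SI X p m d \<omega>)\<^sup>2) = (\<Sum>i<p+m. (?c i - ?y)\<^sup>2) - (p+m) * (mu_SI X p m d \<omega> - ?y)\<^sup>2"
    unfolding mu using assms by (intro sumsq_shift) simp
  also have "(\<Sum>i<p+m. (?c i - ?y)\<^sup>2) = CSS X p \<omega> + (sd X p d \<omega>)\<^sup>2 * Rf X p m d \<omega>"
  proof -
    have A: "(\<Sum>i<p. (?c i - ?y)\<^sup>2) = CSS X p \<omega>"
      unfolding CSS_def by (rule sum.cong) (simp_all add: Y_comp_def)
    have B: "(\<Sum>i\<in>{p..<p+m}. (?c i - ?y)\<^sup>2) = (sd X p d \<omega>)\<^sup>2 * Rf X p m d \<omega>"
      unfolding Rf_def sum_distrib_left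
      by (rule sum.cong) (simp_all add: Y_comp_def Y_imp_def mu_hat_def sd_def power2_eq_square algebra_simps)
    show ?thesis unfolding split_sum A B ..
  qed
  finally show ?thesis using pw_mu_SI[OF assms, of X m d \<omega>] by (simp add: sigma2_SI_def)
qed

lemma pw_mu_MI:
  assumes "p > 0" "D > 0"
  shows "mu_MI X p m D \<omega> = Ybar_obs X p \<omega> + (\<Sum>d<D. sd X p d \<omega> * Wf X p m d \<omega>) / D"
proof -
  have "(\<Sum>d<D. mu_SI X p m d \<omega>) = D * Ybar_obs X p \<omega> + (\<Sum>d<D. sd X p d \<omega> * Wf X p m d \<omega>)"
    using assms by (simp add: pw_mu_SI sum.distrib)
  then show ?thesis using assms by (simp add: mu_MI_def add_divide_distrib)
qed

lemma pw_between:
  assumes "p > 0" "D > 0"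
  shows "(\<Sum>d<D. (mu_SI X p m d \<omega> - mu_MI X p m D \<omega>)\<^sup>2)
    = (\<Sum>d<D. (sd X p d \<omega> * Wf X p m d \<omega>)\<^sup>2) - (\<Sum>d<D. sd X p d \<omega> * Wf X p m d \<omega>)\<^sup>2 / D"
proof -
  let ?a = "\<lambda>d. sd X p d \<omega> * Wf X p m d \<omega>"
  have "(\<Sum>d<D. (mu_SI X p m d \<omega> - mu_MI X p m D \<omega>)\<^sup>2) = (\<Sum>d<D. (?a d - (\<Sum>e<D. ?a e)/D)\<^sup>2)"
    using assms by (simp add: pw_mu_SI pw_mu_MI)
  also have "\<dots> = (\<Sum>d<D. (?a d - 0)\<^sup>2) - D * ((\<Sum>e<D. ?a e)/D - 0)\<^sup>2"
    using assms(2) by (rule sumsq_shift[where c="?a" and y=0])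
  also have "\<dots> = (\<Sum>d<D. (?a d)\<^sup>2) - (\<Sum>e<D. ?a e)\<^sup>2 / D"
    using assms by (simp add: power2_eq_square)
  finally show ?thesis .
qed


locale mi = prob_space M for M :: "'a measure" +
  fixes X :: "rv_label \<Rightarrow> 'a \<Rightarrow> real" and p m D :: nat and \<mu> \<sigma> \<nu> :: real
  assumes p2: "p \<ge> 2" and m1: "m \<ge> 1" and D2: "D \<ge> 2" and spos: "\<sigma> > 0"
    and nu3: "real p + \<nu> > 3"
    and ind: "indep_vars (\<lambda>_. borel) X (rv_index p m D)"
    and dY: "\<And>i. i < p \<Longrightarrow> distributed M lborel (X (Yobs i)) (\<lambda>x. ennreal (normal_density \<mu> \<sigma> x))"
    and dU: "\<And>d. d < D \<Longrightarrow> distributed M lborel (X (Uchi d))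
             (\<lambda>x. ennreal (chi_squared_density (\<nu> + real p - 1) x))"
    and dZ: "\<And>d. d < D \<Longrightarrow> distributed M lborel (X (ZPD d)) (\<lambda>x. ennreal (normal_density 0 (1 / sqrt (real p)) x))"
    and dZi: "\<And>i d. p \<le> i \<Longrightarrow> i < p + m \<Longrightarrow> d < D \<Longrightarrow>
           distributed M lborel (X (Zimp i d)) (\<lambda>x. ennreal (normal_density 0 1 x))"
begin

abbreviation "I \<equiv> rv_index p m D"

lemma meas_X: "l \<in> I \<Longrightarrow> X l \<in> borel_measurable M"
  using ind unfolding indep_vars_def by auto

lemma rep_meas:
  assumes "A \<subseteq> I" "F \<in> borel_measurable (PiM A (\<lambda>_. borel))"
  shows "(\<lambda>\<omega>. F (\<lambda>l\<in>A. X l \<omega>)) \<in> borel_measurable M"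
  by (rule measurable_compose[OF measurable_restrict assms(2)]) (use assms(1) meas_X in auto)

lemma rep_indep:
  assumes "A \<inter> B = {}" "A \<subseteq> I" "B \<subseteq> I"
    "F \<in> borel_measurable (PiM A (\<lambda>_. borel))" "G \<in> borel_measurable (PiM B (\<lambda>_. borel))"
  shows "indep_var borel (\<lambda>\<omega>. F (\<lambda>l\<in>A. X l \<omega>)) borel (\<lambda>\<omega>. G (\<lambda>l\<in>B. X l \<omega>))"
  using indep_var_compose[OF indep_var_restrict[OF ind assms(1-3)] assms(4,5)] by (simp add: comp_def)

lemma indep_prod:
  fixes f g :: "'a \<Rightarrow> real" and F G :: "(rv_label \<Rightarrow> real) \<Rightarrow> real"
  assumes "A \<inter> B = {}" "A \<subseteq> I" "B \<subseteq> I"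
    "F \<in> borel_measurable (PiM A (\<lambda>_. borel))" "G \<in> borel_measurable (PiM B (\<lambda>_. borel))"
    "\<And>\<omega>. f \<omega> = F (\<lambda>l\<in>A. X l \<omega>)" "\<And>\<omega>. g \<omega> = G (\<lambda>l\<in>B. X l \<omega>)"
    "integrable M f" "integrable M g"
  shows "integrable M (\<lambda>\<omega>. f \<omega> * g \<omega>)"
    and "expectation (\<lambda>\<omega>. f \<omega> * g \<omega>) = expectation f * expectation g"
proof -
  have fe: "f = (\<lambda>\<omega>. F (\<lambda>l\<in>A. X l \<omega>))" "g = (\<lambda>\<omega>. G (\<lambda>l\<in>B. X l \<omega>))"
    using assms(6,7) by auto
  have iv: "indep_var borel f borel g" unfolding fe by (rule rep_indep[OF assms(1-5)])
  show "integrable M (\<lambda>\<omega>. f \<omega> * g \<omega>)" by (rule indep_var_integrable[OF iv assms(8,9)])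
  show "expectation (\<lambda>\<omega>. f \<omega> * g \<omega>) = expectation f * expectation g"
    by (rule indep_var_lebesgue_integral[OF iv assms(8,9)])
qed

lemma indep_labels:
  assumes "j \<in> I" "l \<in> I" "j \<noteq> l" "integrable M (X j)" "integrable M (X l)"
  shows "integrable M (\<lambda>\<omega>. X j \<omega> * X l \<omega>)"
    and "expectation (\<lambda>\<omega>. X j \<omega> * X l \<omega>) = expectation (X j) * expectation (X l)"
  using indep_prod[of "{j}" "{l}" "\<lambda>x. x j" "\<lambda>x. x l" "X j" "X l"] assms by auto

lemma quad:
  fixes c :: "rv_label \<Rightarrow> real"
  assumes J: "finite J" "J \<subseteq> I"
    and int1: "\<And>j. j \<in> J \<Longrightarrow> integrable M (X j)"
    and int2: "\<And>j. j \<in> J \<Longrightarrow> integrable M (\<lambda>\<omega>. (X j \<omega>)\<^sup>2)"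
  shows "integrable M (\<lambda>\<omega>. (\<Sum>j\<in>J. c j * X j \<omega>)\<^sup>2)"
    and "expectation (\<lambda>\<omega>. (\<Sum>j\<in>J. c j * X j \<omega>)\<^sup>2) =
       (\<Sum>j\<in>J. c j * expectation (X j))\<^sup>2 +
       (\<Sum>j\<in>J. (c j)\<^sup>2 * (expectation (\<lambda>\<omega>. (X j \<omega>)\<^sup>2) - (expectation (X j))\<^sup>2))"
proof -
  have sq: "(\<Sum>j\<in>J. c j * X j \<omega>)\<^sup>2 = (\<Sum>j\<in>J. \<Sum>l\<in>J. c j * c l * (X j \<omega> * X l \<omega>))" for \<omega>
    by (simp add: power2_eq_square sum_product algebra_simps)
  have pint: "integrable M (\<lambda>\<omega>. X j \<omega> * X l \<omega>)" if "j \<in> J" "l \<in> J" for j l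
  proof (cases "j = l")
    case True then show ?thesis using int2[OF that(1)] by (simp add: power2_eq_square)
  next
    case False then show ?thesis using indep_labels(1) that J int1 by blast
  qed
  have pE: "expectation (\<lambda>\<omega>. X j \<omega> * X l \<omega>) =
      expectation (X j) * expectation (X l) +
      (if j = l then expectation (\<lambda>\<omega>. (X j \<omega>)\<^sup>2) - (expectation (X j))\<^sup>2 else 0)"
    if "j \<in> J" "l \<in> J" for j l
  proof (cases "j = l")
    case True then show ?thesis by (simp add: power2_eq_square)
  next
    case False then show ?thesis using indep_labels(2) that J int1 by auto
  qed
  show "integrable M (\<lambda>\<omega>. (\<Sum>j\<in>J. c j * X j \<omega>)\<^sup>2)"
    unfolding sq by (auto intro!: integrable_sum integrable_mult_right pint)
  have "expectation (\<lambda>\<omega>. (\<Sum>j\<in>J. c j * X j \<omega>)\<^sup>2) =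
      (\<Sum>j\<in>J. \<Sum>l\<in>J. c j * c l * expectation (\<lambda>\<omega>. X j \<omega> * X l \<omega>))"
    unfolding sq
    by (subst Bochner_Integration.integral_sum, fastforce intro!: integrable_sum integrable_mult_right pint)
       (intro sum.cong refl, subst Bochner_Integration.integral_sum, auto intro!: integrable_mult_right pint)
  also have "\<dots> = (\<Sum>j\<in>J. \<Sum>l\<in>J. c j * expectation (X j) * (c l * expectation (X l))) +
      (\<Sum>j\<in>J. (c j)\<^sup>2 * (expectation (\<lambda>\<omega>. (X j \<omega>)\<^sup>2) - (expectation (X j))\<^sup>2))"
  proof -
    let ?v = "\<lambda>j. expectation (\<lambda>\<omega>. (X j \<omega>)\<^sup>2) - (expectation (X j))\<^sup>2"
    have inner: "(\<Sum>l\<in>J. c j * c l * expectation (\<lambda>\<omega>. X j \<omega> * X l \<omega>)) =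
        (\<Sum>l\<in>J. c j * expectation (X j) * (c l * expectation (X l))) + (c j)\<^sup>2 * ?v j" if j: "j \<in> J" for j
    proof -
      have "(\<Sum>l\<in>J. c j * c l * expectation (\<lambda>\<omega>. X j \<omega> * X l \<omega>)) =
          (\<Sum>l\<in>J. c j * expectation (X j) * (c l * expectation (X l)) + (if j = l then (c j)\<^sup>2 * ?v j else 0))"
      proof (rule sum.cong[OF refl])
        fix l assume l: "l \<in> J"
        show "c j * c l * expectation (\<lambda>\<omega>. X j \<omega> * X l \<omega>) =
          c j * expectation (X j) * (c l * expectation (X l)) + (if j = l then (c j)\<^sup>2 * ?v j else 0)"
          unfolding pE[OF j l] by (cases "j = l") (simp_all add: power2_eq_square algebra_simps)
      qed
      also have "\<dots> = (\<Sum>l\<in>J. c j * expectation (X j) * (c l * expectation (X l))) + (c j)\<^sup>2 * ?v j"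
        using J(1) j by (simp add: sum.distrib)
      finally show ?thesis .
    qed
    have "(\<Sum>j\<in>J. \<Sum>l\<in>J. c j * c l * expectation (\<lambda>\<omega>. X j \<omega> * X l \<omega>)) =
       (\<Sum>j\<in>J. (\<Sum>l\<in>J. c j * expectation (X j) * (c l * expectation (X l))) + (c j)\<^sup>2 * ?v j)"
      by (rule sum.cong[OF refl]) (rule inner)
    then show ?thesis by (simp only: sum.distrib)
  qed
  also have "(\<Sum>j\<in>J. \<Sum>l\<in>J. c j * expectation (X j) * (c l * expectation (X l))) = (\<Sum>j\<in>J. c j * expectation (X j))\<^sup>2"
    by (simp add: power2_eq_square sum_product)
  finally show "expectation (\<lambda>\<omega>. (\<Sum>j\<in>J. c j * X j \<omega>)\<^sup>2) =
       (\<Sum>j\<in>J. c j * expectation (X j))\<^sup>2 +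
       (\<Sum>j\<in>J. (c j)\<^sup>2 * (expectation (\<lambda>\<omega>. (X j \<omega>)\<^sup>2) - (expectation (X j))\<^sup>2))" .
qed

lemma normal_mom:
  assumes D: "distributed M lborel Y (\<lambda>x. ennreal (normal_density a b x))" and b: "b > 0"
  shows "integrable M Y" "integrable M (\<lambda>\<omega>. (Y \<omega>)\<^sup>2)" "expectation Y = a"
    "expectation (\<lambda>\<omega>. (Y \<omega>)\<^sup>2) = a\<^sup>2 + b\<^sup>2"
proof -
  show i1: "integrable M Y"
    using distributed_integrable[OF D, of "\<lambda>x. x"] integrable_normal_moment_nz_1[of b a] b by simp
  have "integrable lborel (\<lambda>x. normal_density a b x * (x - a)^2 + 2 * a * (normal_density a b x * x) - a\<^sup>2 * normal_density a b x)"
    by (intro Bochner_Integration.integrable_diff Bochner_Integration.integrable_add integrable_mult_right integrable_normal_moment[OF b]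
          integrable_normal_moment_nz_1[OF b] integrable_normal_density[OF b])
  also have "(\<lambda>x. normal_density a b x * (x - a)^2 + 2 * a * (normal_density a b x * x) - a\<^sup>2 * normal_density a b x)
     = (\<lambda>x. normal_density a b x * x\<^sup>2)"
    by (rule ext) (simp add: power2_eq_square algebra_simps)
  finally show i2: "integrable M (\<lambda>\<omega>. (Y \<omega>)\<^sup>2)"
    using distributed_integrable[OF D, of "\<lambda>x. x\<^sup>2"] by simp
  show e1: "expectation Y = a" using normal_distributed_expectation[OF b D] .
  have "variance Y = b\<^sup>2" using normal_distributed_variance[OF b D] .
  then show "expectation (\<lambda>\<omega>. (Y \<omega>)\<^sup>2) = a\<^sup>2 + b\<^sup>2"
    using variance_eq[OF i1 i2] e1 by simp
qed

end


lemma chi_nonneg: "k > 0 \<Longrightarrow> chi_squared_density k x \<ge> 0"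
  by (simp add: chi_squared_density_def Gamma_real_pos less_imp_le)

abbreviation vec :: "(rv_label \<Rightarrow> real) \<Rightarrow> rv_label \<Rightarrow> unit \<Rightarrow> real" where
  "vec x \<equiv> (\<lambda>l _. x l)"

lemma rY: "Yobs ` {..<p} \<subseteq> A \<Longrightarrow> Ybar_obs X p \<omega> = Ybar_obs (vec (\<lambda>l\<in>A. X l \<omega>)) p ()"
  unfolding Ybar_obs_def by (auto intro!: sum.cong arg_cong2[where f="(/)"])

lemma rCSS: "Yobs ` {..<p} \<subseteq> A \<Longrightarrow> CSS X p \<omega> = CSS (vec (\<lambda>l\<in>A. X l \<omega>)) p ()"
  unfolding CSS_def using rY[of p A X \<omega>] by (auto intro!: sum.cong)

lemma rsd: "Yobs ` {..<p} \<subseteq> A \<Longrightarrow> Uchi d \<in> A \<Longrightarrow> sd X p d \<omega> = sd (vec (\<lambda>l\<in>A. X l \<omega>)) p d ()"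
  unfolding sd_def sigma2_hat_def using rCSS[of p A X \<omega>] by auto

definition GZ :: "nat \<Rightarrow> nat \<Rightarrow> nat \<Rightarrow> rv_label set" where
  "GZ p m d = insert (ZPD d) ((\<lambda>i. Zimp i d) ` {p..<p+m})"

lemma rW: "GZ p m d \<subseteq> A \<Longrightarrow> Wf X p m d \<omega> = Wf (vec (\<lambda>l\<in>A. X l \<omega>)) p m d ()"
  unfolding Wf_def GZ_def by (auto intro!: sum.cong arg_cong2[where f="(/)"])

lemma rR: "GZ p m d \<subseteq> A \<Longrightarrow> Rf X p m d \<omega> = Rf (vec (\<lambda>l\<in>A. X l \<omega>)) p m d ()"
  unfolding Rf_def GZ_def by (auto intro!: sum.cong)

lemma mY[measurable]: "Yobs ` {..<p} \<subseteq> A \<Longrightarrow> (\<lambda>x. Ybar_obs (vec x) p ()) \<in> borel_measurable (PiM A (\<lambda>_. borel))"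
  unfolding Ybar_obs_def by measurable auto

lemma mCSS: "Yobs ` {..<p} \<subseteq> A \<Longrightarrow> (\<lambda>x. CSS (vec x) p ()) \<in> borel_measurable (PiM A (\<lambda>_. borel))"
  unfolding CSS_def Ybar_obs_def by measurable (auto intro!: mY[unfolded Ybar_obs_def])
lemma msd: "Yobs ` {..<p} \<subseteq> A \<Longrightarrow> Uchi d \<in> A \<Longrightarrow> (\<lambda>x. sd (vec x) p d ()) \<in> borel_measurable (PiM A (\<lambda>_. borel))"
  unfolding sd_def sigma2_hat_def CSS_def Ybar_obs_def by measurable (auto intro!: mY[unfolded Ybar_obs_def])
lemma mW: "GZ p m d \<subseteq> A \<Longrightarrow> (\<lambda>x. Wf (vec x) p m d ()) \<in> borel_measurable (PiM A (\<lambda>_. borel))"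
  unfolding Wf_def GZ_def by measurable auto
lemma mR: "GZ p m d \<subseteq> A \<Longrightarrow> (\<lambda>x. Rf (vec x) p m d ()) \<in> borel_measurable (PiM A (\<lambda>_. borel))"
  unfolding Rf_def GZ_def by measurable auto
lemma mcomp: "l \<in> A \<Longrightarrow> (\<lambda>x. x l) \<in> borel_measurable (PiM A (\<lambda>_. borel))"
  by measurable
lemma mUinv: "l \<in> A \<Longrightarrow> (\<lambda>x::rv_label\<Rightarrow>real. \<bar>1 / x l\<bar>) \<in> borel_measurable (PiM A (\<lambda>_. borel))"
proof -
  assume l: "l \<in> A"
  have 1: "(\<lambda>y::real. \<bar>1/y\<bar>) \<in> borel_measurable borel" by measurable
  have 2: "(\<lambda>x::rv_label\<Rightarrow>real. x l) \<in> borel_measurable (PiM A (\<lambda>_. borel))" by (rule mcomp) (rule l)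
  show ?thesis using measurable_compose[OF 2 1] by simp
qed


context mi begin

abbreviation "AY \<equiv> Yobs ` {..<p}"
abbreviation "n \<equiv> p + m"

lemma AY_I: "AY \<subseteq> I" by (auto simp: rv_index_def)
lemma U_I: "d < D \<Longrightarrow> Uchi d \<in> I" by (auto simp: rv_index_def)
lemma GZ_I: "d < D \<Longrightarrow> GZ p m d \<subseteq> I" by (auto simp: rv_index_def GZ_def)
lemma p0: "p > 0" using p2 by simp
lemma D0: "D > 0" using D2 by simp

lemma Ymom: assumes "i < p"
  shows "integrable M (X (Yobs i))" "integrable M (\<lambda>\<omega>. (X (Yobs i) \<omega>)\<^sup>2)"
    "expectation (X (Yobs i)) = \<mu>" "expectation (\<lambda>\<omega>. (X (Yobs i) \<omega>)\<^sup>2) = \<mu>\<^sup>2 + \<sigma>\<^sup>2"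
  using normal_mom[OF dY[OF assms] spos] by auto

lemma Zmom: assumes "d < D"
  shows "integrable M (X (ZPD d))" "integrable M (\<lambda>\<omega>. (X (ZPD d) \<omega>)\<^sup>2)"
    "expectation (X (ZPD d)) = 0" "expectation (\<lambda>\<omega>. (X (ZPD d) \<omega>)\<^sup>2) = 1 / real p"
proof -
  have b: "1 / sqrt (real p) > 0" using p0 by simp
  note N = normal_mom[OF dZ[OF assms] b]
  show "integrable M (X (ZPD d))" "integrable M (\<lambda>\<omega>. (X (ZPD d) \<omega>)\<^sup>2)" "expectation (X (ZPD d)) = 0"
    using N by auto
  show "expectation (\<lambda>\<omega>. (X (ZPD d) \<omega>)\<^sup>2) = 1 / real p"
    using N(4) p0 by (simp add: power_divide)
qed

lemma Zimom: assumes "p \<le> i" "i < n" "d < D"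
  shows "integrable M (X (Zimp i d))" "integrable M (\<lambda>\<omega>. (X (Zimp i d) \<omega>)\<^sup>2)"
    "expectation (X (Zimp i d)) = 0" "expectation (\<lambda>\<omega>. (X (Zimp i d) \<omega>)\<^sup>2) = 1"
  using normal_mom[OF dZi[OF assms] zero_less_one] by auto

lemma chimom: assumes "d < D"
  shows "integrable M (\<lambda>\<omega>. \<bar>1 / X (Uchi d) \<omega>\<bar>)"
    "expectation (\<lambda>\<omega>. \<bar>1 / X (Uchi d) \<omega>\<bar>) = 1 / (real p + \<nu> - 3)"
proof -
  let ?k = "\<nu> + real p - 1"
  have k: "?k > 2" using nu3 by simp
  have hb: "has_bochner_integral lborel (\<lambda>x. chi_squared_density ?k x * \<bar>1/x\<bar>) (1/(?k-2))"
    by (rule chi_inv_moment[OF k])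
  have nn: "\<And>x. 0 \<le> chi_squared_density ?k x" using k by (intro chi_nonneg) simp
  show "integrable M (\<lambda>\<omega>. \<bar>1 / X (Uchi d) \<omega>\<bar>)"
    using distributed_integrable[OF dU[OF assms], of "\<lambda>x. \<bar>1/x\<bar>"] hb nn
    by (auto simp: has_bochner_integral_iff)
  have "expectation (\<lambda>\<omega>. \<bar>1 / X (Uchi d) \<omega>\<bar>) = 1/(?k-2)"
    using distributed_integral[OF dU[OF assms], of "\<lambda>x. \<bar>1/x\<bar>"] hb nn
    by (auto simp: has_bochner_integral_iff)
  then show "expectation (\<lambda>\<omega>. \<bar>1 / X (Uchi d) \<omega>\<bar>) = 1 / (real p + \<nu> - 3)"
    by (simp add: algebra_simps)
qed


lemma injY: "inj_on Yobs A" by (auto simp: inj_on_def)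
lemma cardAY: "card AY = p" by (simp add: card_image injY)

lemma Yb_sum: "Ybar_obs X p \<omega> = (\<Sum>j\<in>AY. (1 / real p) * X j \<omega>)"
  by (simp add: sum.reindex injY Ybar_obs_def sum_divide_distrib)

lemma AY_mom:
  assumes "j \<in> AY"
  shows "integrable M (X j)" "integrable M (\<lambda>\<omega>. (X j \<omega>)\<^sup>2)"
    "expectation (X j) = \<mu>" "expectation (\<lambda>\<omega>. (X j \<omega>)\<^sup>2) = \<mu>\<^sup>2 + \<sigma>\<^sup>2"
  using assms Ymom by auto

lemma Yb_mom:
  shows "integrable M (Ybar_obs X p)" "expectation (Ybar_obs X p) = \<mu>"
    "integrable M (\<lambda>\<omega>. (Ybar_obs X p \<omega>)\<^sup>2)"
    "expectation (\<lambda>\<omega>. (Ybar_obs X p \<omega>)\<^sup>2) = \<mu>\<^sup>2 + \<sigma>\<^sup>2 / real p"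
proof -
  have e: "Ybar_obs X p = (\<lambda>\<omega>. \<Sum>j\<in>AY. (1 / real p) * X j \<omega>)" by (rule ext) (rule Yb_sum)
  show "integrable M (Ybar_obs X p)" unfolding e using AY_mom by auto
  have "expectation (Ybar_obs X p) = (\<Sum>j\<in>AY. (1 / real p) * expectation (X j))"
    unfolding e using AY_mom by (subst Bochner_Integration.integral_sum) auto
  also have "\<dots> = (\<Sum>j\<in>AY. (1 / real p) * \<mu>)" using AY_mom by (intro sum.cong) auto
  also have "\<dots> = \<mu>" using p0 by (simp add: cardAY)
  finally show "expectation (Ybar_obs X p) = \<mu>" .
  note Q = quad[of AY "\<lambda>_. 1 / real p"]
  show "integrable M (\<lambda>\<omega>. (Ybar_obs X p \<omega>)\<^sup>2)" unfolding e using Q(1) AY_I AY_mom by auto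
  have "expectation (\<lambda>\<omega>. (Ybar_obs X p \<omega>)\<^sup>2) = (\<Sum>j\<in>AY. 1 / real p * \<mu>)\<^sup>2 +
       (\<Sum>j\<in>AY. (1 / real p)\<^sup>2 * (\<mu>\<^sup>2 + \<sigma>\<^sup>2 - \<mu>\<^sup>2))"
    unfolding e using Q(2) AY_I AY_mom by (auto intro!: sum.cong)
  also have "\<dots> = \<mu>\<^sup>2 + \<sigma>\<^sup>2 / real p" using p0 by (simp add: cardAY power2_eq_square)
  finally show "expectation (\<lambda>\<omega>. (Ybar_obs X p \<omega>)\<^sup>2) = \<mu>\<^sup>2 + \<sigma>\<^sup>2 / real p" .
qed

lemma CSS_pw: "CSS X p \<omega> = (\<Sum>i<p. (X (Yobs i) \<omega>)\<^sup>2) - real p * (Ybar_obs X p \<omega>)\<^sup>2"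
  using sumsq_shift[OF p0, of "\<lambda>i. X (Yobs i) \<omega>" 0] by (simp add: CSS_def Ybar_obs_def)

lemma CSS_nonneg: "CSS X p \<omega> \<ge> 0" by (simp add: CSS_def sum_nonneg)

lemma CSS_mom: "integrable M (CSS X p)" "expectation (CSS X p) = (real p - 1) * \<sigma>\<^sup>2"
proof -
  have e: "CSS X p = (\<lambda>\<omega>. (\<Sum>i<p. (X (Yobs i) \<omega>)\<^sup>2) - real p * (Ybar_obs X p \<omega>)\<^sup>2)"
    by (rule ext) (rule CSS_pw)
  show "integrable M (CSS X p)" unfolding e
    by (intro Bochner_Integration.integrable_diff integrable_sum integrable_mult_right) (auto simp: Ymom Yb_mom)
  have "expectation (CSS X p) = (\<Sum>i<p. expectation (\<lambda>\<omega>. (X (Yobs i) \<omega>)\<^sup>2)) - real p * (\<mu>\<^sup>2 + \<sigma>\<^sup>2 / real p)"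
    unfolding e using Ymom Yb_mom
    by (subst Bochner_Integration.integral_diff) (auto simp: Bochner_Integration.integral_sum)
  also have "\<dots> = real p * (\<mu>\<^sup>2 + \<sigma>\<^sup>2) - real p * (\<mu>\<^sup>2 + \<sigma>\<^sup>2 / real p)"
    using Ymom by simp
  also have "\<dots> = (real p - 1) * \<sigma>\<^sup>2" using p0 by (simp add: field_simps)
  finally show "expectation (CSS X p) = (real p - 1) * \<sigma>\<^sup>2" .
qed


definition cW :: "nat \<Rightarrow> rv_label \<Rightarrow> real" where
  "cW d j = (if j = ZPD d then real m / real n else 1 / real n)"

lemma injZ: "inj_on (\<lambda>i. Zimp i d) A" by (auto simp: inj_on_def)

lemma GZ_fin: "finite (GZ p m d)" by (simp add: GZ_def)

lemma W_sum: "Wf X p m d \<omega> = (\<Sum>j\<in>GZ p m d. cW d j * X j \<omega>)"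
proof -
  have "(\<Sum>j\<in>GZ p m d. cW d j * X j \<omega>) = real m / real n * X (ZPD d) \<omega> + (\<Sum>i\<in>{p..<n}. 1 / real n * X (Zimp i d) \<omega>)"
    unfolding GZ_def by (subst sum.insert) (auto simp: sum.reindex injZ cW_def)
  then show ?thesis by (simp add: Wf_def add_divide_distrib sum_divide_distrib)
qed

lemma GZ_mom:
  assumes "d < D" "j \<in> GZ p m d"
  shows "integrable M (X j)" "integrable M (\<lambda>\<omega>. (X j \<omega>)\<^sup>2)" "expectation (X j) = 0"
    "expectation (\<lambda>\<omega>. (X j \<omega>)\<^sup>2) = (if j = ZPD d then 1 / real p else 1)"
  using assms Zmom[OF assms(1)] Zimom by (auto simp: GZ_def)

lemma auxW: fixes N P mm :: real assumes "N > 0" "P > 0" "N = mm + P"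
  shows "(mm / N)\<^sup>2 * (1 / P) + mm * (1 / N)\<^sup>2 = mm / (P * N)"
proof -
  have "(mm / N)\<^sup>2 * (1 / P) + mm * (1 / N)\<^sup>2 = mm * (mm + P) / (P * N * N)"
    using assms(1,2) by (simp add: field_simps power2_eq_square)
  also have "\<dots> = mm * N / (P * N * N)" using assms(3) by (simp add: add.commute)
  also have "\<dots> = mm / (P * N)" using assms(1,2) by (simp add: field_simps)
  finally show ?thesis .
qed

lemma W_mom: assumes "d < D"
  shows "integrable M (Wf X p m d)" "expectation (Wf X p m d) = 0"
    "integrable M (\<lambda>\<omega>. (Wf X p m d \<omega>)\<^sup>2)"
    "expectation (\<lambda>\<omega>. (Wf X p m d \<omega>)\<^sup>2) = real m / (real p * real n)"
proof -
  have e: "Wf X p m d = (\<lambda>\<omega>. \<Sum>j\<in>GZ p m d. cW d j * X j \<omega>)" by (rule ext) (rule W_sum)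
  show "integrable M (Wf X p m d)" unfolding e using GZ_mom[OF assms] by auto
  show "expectation (Wf X p m d) = 0"
    unfolding e using GZ_mom[OF assms] by (subst Bochner_Integration.integral_sum) auto
  note Q = quad[OF GZ_fin GZ_I[OF assms], of "cW d"]
  show "integrable M (\<lambda>\<omega>. (Wf X p m d \<omega>)\<^sup>2)" unfolding e using Q(1) GZ_mom[OF assms] by auto
  have "expectation (\<lambda>\<omega>. (Wf X p m d \<omega>)\<^sup>2) =
      (\<Sum>j\<in>GZ p m d. (cW d j)\<^sup>2 * (if j = ZPD d then 1 / real p else 1))"
    unfolding e using Q(2) GZ_mom[OF assms] by (auto intro!: sum.cong)
  also have "\<dots> = (real m / real n)\<^sup>2 * (1 / real p) + (\<Sum>i\<in>{p..<n}. (1 / real n)\<^sup>2)"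
    unfolding GZ_def by (subst sum.insert) (auto simp: sum.reindex injZ cW_def)
  also have "\<dots> = real m / (real p * real n)"
    using auxW[of "real n" "real p" "real m"] p0 by simp
  finally show "expectation (\<lambda>\<omega>. (Wf X p m d \<omega>)\<^sup>2) = real m / (real p * real n)" .
qed

lemma R_mom: assumes "d < D"
  shows "integrable M (Rf X p m d)"
    "expectation (Rf X p m d) = real m * (1 / real p + 1)"
proof -
  have pair: "integrable M (\<lambda>\<omega>. (X (ZPD d) \<omega> + X (Zimp i d) \<omega>)\<^sup>2) \<and>
     expectation (\<lambda>\<omega>. (X (ZPD d) \<omega> + X (Zimp i d) \<omega>)\<^sup>2) = 1 / real p + 1"
    if i: "i \<in> {p..<n}" for i
  proof -
    let ?J = "{ZPD d, Zimp i d}"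
    have J: "?J \<subseteq> GZ p m d" using i by (auto simp: GZ_def)
    have e: "(\<lambda>\<omega>. (X (ZPD d) \<omega> + X (Zimp i d) \<omega>)\<^sup>2) = (\<lambda>\<omega>. (\<Sum>j\<in>?J. 1 * X j \<omega>)\<^sup>2)"
      by simp
    note Q = quad[of ?J "\<lambda>_. 1"]
    have JI: "?J \<subseteq> I" using J GZ_I[OF assms] by auto
    have mom: "\<And>j. j \<in> ?J \<Longrightarrow> integrable M (X j) \<and> integrable M (\<lambda>\<omega>. (X j \<omega>)\<^sup>2) \<and> expectation (X j) = 0 \<and>
       expectation (\<lambda>\<omega>. (X j \<omega>)\<^sup>2) = (if j = ZPD d then 1 / real p else 1)"
      using GZ_mom[OF assms] J by blast
    show ?thesis unfolding e using Q JI mom by (simp add: sum.insert)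
  qed
  show "integrable M (Rf X p m d)" unfolding Rf_def using pair by auto
  have "expectation (Rf X p m d) = (\<Sum>i\<in>{p..<n}. 1 / real p + 1)"
    unfolding Rf_def using pair by (subst Bochner_Integration.integral_sum) auto
  then show "expectation (Rf X p m d) = real m * (1 / real p + 1)" by simp
qed

end


context mi begin

definition "S = (real p - 1) * \<sigma>\<^sup>2 / (real p + \<nu> - 3)"

abbreviation "Qf d \<omega> \<equiv> CSS X p \<omega> * \<bar>1 / X (Uchi d) \<omega>\<bar>"

lemma sd_sq: "(sd X p d \<omega>)\<^sup>2 = Qf d \<omega>"
proof -
  have "(sd X p d \<omega>)\<^sup>2 = \<bar>CSS X p \<omega> / X (Uchi d) \<omega>\<bar>"
    by (simp add: sd_def sigma2_hat_def power2_eq_square real_sqrt_mult_self)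
  also have "\<dots> = Qf d \<omega>" using CSS_nonneg[of \<omega>] by (simp add: abs_mult abs_divide)
  finally show ?thesis .
qed

lemma int_bound:
  fixes f g :: "'a \<Rightarrow> real"
  assumes "integrable M g" "f \<in> borel_measurable M" "\<And>\<omega>. \<bar>f \<omega>\<bar> \<le> g \<omega>"
  shows "integrable M f"
proof (rule Bochner_Integration.integrable_bound[OF assms(1,2)])
  show "AE x in M. norm (f x) \<le> norm (g x)"
    using assms(3) by (intro AE_I2) (metis abs_ge_zero abs_of_nonneg order_trans real_norm_def)
qed

lemma abs_le_sq: "\<bar>a * b\<bar> \<le> (a\<^sup>2 + b\<^sup>2) / 2" for a b :: real
proof -
  have "0 \<le> (\<bar>a\<bar> - \<bar>b\<bar>)\<^sup>2" by simp
  then show ?thesis by (simp add: power2_eq_square abs_mult algebra_simps)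
qed

lemma Q_mom: assumes d: "d < D"
  shows "integrable M (Qf d)" "expectation (Qf d) = S"
proof -
  have U: "{Uchi d} \<subseteq> I" using U_I[OF d] by auto
  note IP = indep_prod[of AY "{Uchi d}" "\<lambda>x. CSS (vec x) p ()" "\<lambda>x. \<bar>1 / x (Uchi d)\<bar>"
      "CSS X p" "\<lambda>\<omega>. \<bar>1 / X (Uchi d) \<omega>\<bar>"]
  have h1: "AY \<inter> {Uchi d} = {}" by auto
  have h2: "(\<lambda>x. CSS (vec x) p ()) \<in> borel_measurable (PiM AY (\<lambda>_. borel))" by (rule mCSS) simp
  have h3: "(\<lambda>x::rv_label\<Rightarrow>real. \<bar>1 / x (Uchi d)\<bar>) \<in> borel_measurable (PiM {Uchi d} (\<lambda>_. borel))"
    by (rule mUinv) simp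
  have h4: "\<And>\<omega>. CSS X p \<omega> = CSS (vec (\<lambda>l\<in>AY. X l \<omega>)) p ()" by (rule rCSS) simp
  note h = h1 h2 h3 h4
  show "integrable M (Qf d)" using IP h AY_I U CSS_mom chimom[OF d] by auto
  have "expectation (Qf d) = (real p - 1) * \<sigma>\<^sup>2 * (1 / (real p + \<nu> - 3))"
    using IP h AY_I U CSS_mom chimom[OF d] by auto
  then show "expectation (Qf d) = S" by (simp add: S_def)
qed


abbreviation "A1 d \<equiv> insert (Uchi d) AY"

lemma AY_A1: "AY \<subseteq> A1 d" by auto
lemma GZ_refl: "GZ p m d \<subseteq> GZ p m d" by simp

lemma A1_I: "d < D \<Longrightarrow> A1 d \<subseteq> I" using AY_I U_I by auto

lemma mQ: "(\<lambda>x::rv_label\<Rightarrow>real. CSS (vec x) p () * \<bar>1 / x (Uchi d)\<bar>) \<in> borel_measurable (PiM (A1 d) (\<lambda>_. borel))"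
  by (intro borel_measurable_times mCSS mUinv) auto

lemma rQ: "Qf d \<omega> = CSS (vec (\<lambda>l\<in>A1 d. X l \<omega>)) p () * \<bar>1 / (\<lambda>l\<in>A1 d. X l \<omega>) (Uchi d)\<bar>"
proof -
  have c: "CSS X p \<omega> = CSS (vec (\<lambda>l\<in>A1 d. X l \<omega>)) p ()" by (rule rCSS) auto
  show ?thesis by (subst c) simp
qed

lemma QG_mom:
  fixes g :: "'a \<Rightarrow> real" and Gf :: "(rv_label \<Rightarrow> real) \<Rightarrow> real"
  assumes d: "d < D" and G: "Gf \<in> borel_measurable (PiM (GZ p m d) (\<lambda>_. borel))"
    "\<And>\<omega>. g \<omega> = Gf (\<lambda>l\<in>GZ p m d. X l \<omega>)" "integrable M g"
  shows "integrable M (\<lambda>\<omega>. Qf d \<omega> * g \<omega>)" "expectation (\<lambda>\<omega>. Qf d \<omega> * g \<omega>) = S * expectation g"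
proof -
  have dj: "A1 d \<inter> GZ p m d = {}" by (auto simp: GZ_def)
  note IP = indep_prod[OF dj A1_I[OF d] GZ_I[OF d] mQ G(1) rQ G(2) Q_mom(1)[OF d] G(3)]
  show "integrable M (\<lambda>\<omega>. Qf d \<omega> * g \<omega>)" using IP(1) .
  show "expectation (\<lambda>\<omega>. Qf d \<omega> * g \<omega>) = S * expectation g" using IP(2) Q_mom(2)[OF d] by simp
qed

lemma mW2: "(\<lambda>x. (Wf (vec x) p m d ())\<^sup>2) \<in> borel_measurable (PiM (GZ p m d) (\<lambda>_. borel))"
  by (intro borel_measurable_power mW GZ_refl)

lemma QW_mom: assumes d: "d < D"
  shows "integrable M (\<lambda>\<omega>. Qf d \<omega> * (Wf X p m d \<omega>)\<^sup>2)"
    "expectation (\<lambda>\<omega>. Qf d \<omega> * (Wf X p m d \<omega>)\<^sup>2) = S * (real m / (real p * real n))"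
  using QG_mom[OF d mW2, where g="\<lambda>\<omega>. (Wf X p m d \<omega>)\<^sup>2"] W_mom[OF d] rW[OF GZ_refl, of X] by auto

lemma QR_mom: assumes d: "d < D"
  shows "integrable M (\<lambda>\<omega>. Qf d \<omega> * Rf X p m d \<omega>)"
    "expectation (\<lambda>\<omega>. Qf d \<omega> * Rf X p m d \<omega>) = S * (real m * (1 / real p + 1))"
  using QG_mom[OF d mR[OF GZ_refl], where g="Rf X p m d"] R_mom[OF d] rR[OF GZ_refl, of X] by auto

lemma fW:
  fixes f :: "'a \<Rightarrow> real" and F :: "(rv_label \<Rightarrow> real) \<Rightarrow> real"
  assumes d: "d < D" and A: "A \<subseteq> I" "A \<inter> GZ p m d = {}"
    and F: "F \<in> borel_measurable (PiM A (\<lambda>_. borel))" "\<And>\<omega>. f \<omega> = F (\<lambda>l\<in>A. X l \<omega>)" "integrable M f"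
  shows "integrable M (\<lambda>\<omega>. f \<omega> * Wf X p m d \<omega>)" "expectation (\<lambda>\<omega>. f \<omega> * Wf X p m d \<omega>) = 0"
proof -
  note IP = indep_prod[OF A(2) A(1) GZ_I[OF d] F(1) mW[OF GZ_refl] F(2) rW[OF GZ_refl] F(3) W_mom(1)[OF d]]
  show "integrable M (\<lambda>\<omega>. f \<omega> * Wf X p m d \<omega>)" using IP(1) by simp
  show "expectation (\<lambda>\<omega>. f \<omega> * Wf X p m d \<omega>) = 0" using IP(2) W_mom(2)[OF d] by simp
qed

lemma sd_meas: "d < D \<Longrightarrow> sd X p d \<in> borel_measurable M"
proof -
  assume d: "d < D"
  have "sd X p d = (\<lambda>\<omega>. sd (vec (\<lambda>l\<in>A1 d. X l \<omega>)) p d ())" by (rule ext) (rule rsd[OF AY_A1]; simp)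
  also have "\<dots> \<in> borel_measurable M" by (rule rep_meas[OF A1_I[OF d]]) (rule msd[OF AY_A1]; simp)
  finally show ?thesis .
qed

lemma Yb_meas: "Ybar_obs X p \<in> borel_measurable M"
proof -
  have "Ybar_obs X p = (\<lambda>\<omega>. Ybar_obs (vec (\<lambda>l\<in>AY. X l \<omega>)) p ())" by (rule ext) (rule rY; simp)
  also have "\<dots> \<in> borel_measurable M" by (rule rep_meas[OF AY_I]) (rule mY; simp)
  finally show ?thesis .
qed

lemma W_meas: "d < D \<Longrightarrow> Wf X p m d \<in> borel_measurable M"
  using W_mom(1) by (rule borel_measurable_integrable)

lemma sd_int: assumes d: "d < D" shows "integrable M (sd X p d)"
proof (rule int_bound)
  show "integrable M (\<lambda>\<omega>. (Qf d \<omega> + 1) / 2)" using Q_mom[OF d] by auto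
  show "sd X p d \<in> borel_measurable M" by (rule sd_meas[OF d])
  fix \<omega> show "\<bar>sd X p d \<omega>\<bar> \<le> (Qf d \<omega> + 1) / 2"
    using abs_le_sq[of "sd X p d \<omega>" 1] sd_sq[of d \<omega>] by simp
qed

lemma a_mean: assumes d: "d < D"
  shows "integrable M (\<lambda>\<omega>. sd X p d \<omega> * Wf X p m d \<omega>)" "expectation (\<lambda>\<omega>. sd X p d \<omega> * Wf X p m d \<omega>) = 0"
proof -
  have dj: "A1 d \<inter> GZ p m d = {}" by (auto simp: GZ_def)
  have r: "\<And>\<omega>. sd X p d \<omega> = sd (vec (\<lambda>l\<in>A1 d. X l \<omega>)) p d ()" by (rule rsd[OF AY_A1]) simp
  have ms: "(\<lambda>x. sd (vec x) p d ()) \<in> borel_measurable (PiM (A1 d) (\<lambda>_. borel))" by (rule msd[OF AY_A1]) simp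
  note R = fW[OF d A1_I[OF d] dj ms r sd_int[OF d]]
  show "integrable M (\<lambda>\<omega>. sd X p d \<omega> * Wf X p m d \<omega>)" using R(1) .
  show "expectation (\<lambda>\<omega>. sd X p d \<omega> * Wf X p m d \<omega>) = 0" using R(2) .
qed


lemma Ya: assumes d: "d < D"
  shows "integrable M (\<lambda>\<omega>. Ybar_obs X p \<omega> * (sd X p d \<omega> * Wf X p m d \<omega>))"
    "expectation (\<lambda>\<omega>. Ybar_obs X p \<omega> * (sd X p d \<omega> * Wf X p m d \<omega>)) = 0"
proof -
  have dj: "A1 d \<inter> GZ p m d = {}" by (auto simp: GZ_def)
  let ?f = "\<lambda>\<omega>. Ybar_obs X p \<omega> * sd X p d \<omega>"
  have r: "\<And>\<omega>. ?f \<omega> = Ybar_obs (vec (\<lambda>l\<in>A1 d. X l \<omega>)) p () * sd (vec (\<lambda>l\<in>A1 d. X l \<omega>)) p d ()"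
    by (subst rsd[OF AY_A1[of d] insertI1], subst rY[OF AY_A1[of d]]) (rule refl)
  have ms: "(\<lambda>x. Ybar_obs (vec x) p () * sd (vec x) p d ()) \<in> borel_measurable (PiM (A1 d) (\<lambda>_. borel))"
    by (intro borel_measurable_times msd mY AY_A1) simp
  have fi: "integrable M ?f"
  proof (rule int_bound)
    show "integrable M (\<lambda>\<omega>. ((Ybar_obs X p \<omega>)\<^sup>2 + Qf d \<omega>) / 2)" using Q_mom[OF d] Yb_mom by auto
    show "?f \<in> borel_measurable M" using Yb_meas sd_meas[OF d] by measurable
    fix \<omega> show "\<bar>?f \<omega>\<bar> \<le> ((Ybar_obs X p \<omega>)\<^sup>2 + Qf d \<omega>) / 2"
      using abs_le_sq[of "Ybar_obs X p \<omega>" "sd X p d \<omega>"] sd_sq[of d \<omega>] by simp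
  qed
  note R = fW[OF d A1_I[OF d] dj ms r fi]
  show "integrable M (\<lambda>\<omega>. Ybar_obs X p \<omega> * (sd X p d \<omega> * Wf X p m d \<omega>))" using R(1) by (simp add: mult.assoc)
  show "expectation (\<lambda>\<omega>. Ybar_obs X p \<omega> * (sd X p d \<omega> * Wf X p m d \<omega>)) = 0" using R(2) by (simp add: mult.assoc)
qed

lemma pair_ne: assumes d: "d < D" and e: "e < D" and de: "d \<noteq> e"
  shows "integrable M (\<lambda>\<omega>. sd X p d \<omega> * Wf X p m d \<omega> * (sd X p e \<omega> * Wf X p m e \<omega>))"
    "expectation (\<lambda>\<omega>. sd X p d \<omega> * Wf X p m d \<omega> * (sd X p e \<omega> * Wf X p m e \<omega>)) = 0"
proof -
  define A where "A = insert (Uchi e) (A1 d) \<union> GZ p m d"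
  have AI: "A \<subseteq> I" using A1_I[OF d] U_I[OF e] GZ_I[OF d] by (auto simp: A_def)
  have dj: "A \<inter> GZ p m e = {}" using de by (auto simp: GZ_def A_def)
  have s1: "AY \<subseteq> A" "Uchi d \<in> A" "Uchi e \<in> A" "GZ p m d \<subseteq> A" by (auto simp: A_def)
  let ?f = "\<lambda>\<omega>. sd X p d \<omega> * Wf X p m d \<omega> * sd X p e \<omega>"
  have r: "\<And>\<omega>. ?f \<omega> = sd (vec (\<lambda>l\<in>A. X l \<omega>)) p d () * Wf (vec (\<lambda>l\<in>A. X l \<omega>)) p m d () * sd (vec (\<lambda>l\<in>A. X l \<omega>)) p e ()"
    by (subst rsd[OF s1(1,2)], subst rsd[OF s1(1,3)], subst rW[OF s1(4)]) (rule refl)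
  have ms: "(\<lambda>x. sd (vec x) p d () * Wf (vec x) p m d () * sd (vec x) p e ()) \<in> borel_measurable (PiM A (\<lambda>_. borel))"
    by (intro borel_measurable_times msd mW s1)
  have fi: "integrable M ?f"
  proof (rule int_bound)
    show "integrable M (\<lambda>\<omega>. (Qf d \<omega> * (Wf X p m d \<omega>)\<^sup>2 + Qf e \<omega>) / 2)" using Q_mom[OF e] QW_mom[OF d] by auto
    show "?f \<in> borel_measurable M" using W_meas[OF d] sd_meas[OF d] sd_meas[OF e] by measurable
    fix \<omega> show "\<bar>?f \<omega>\<bar> \<le> (Qf d \<omega> * (Wf X p m d \<omega>)\<^sup>2 + Qf e \<omega>) / 2"
      using abs_le_sq[of "sd X p d \<omega> * Wf X p m d \<omega>" "sd X p e \<omega>"] sd_sq[of d \<omega>] sd_sq[of e \<omega>]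
      by (simp add: power_mult_distrib)
  qed
  note R = fW[OF e AI dj ms r fi]
  show "integrable M (\<lambda>\<omega>. sd X p d \<omega> * Wf X p m d \<omega> * (sd X p e \<omega> * Wf X p m e \<omega>))" using R(1) by (simp add: mult.assoc)
  show "expectation (\<lambda>\<omega>. sd X p d \<omega> * Wf X p m d \<omega> * (sd X p e \<omega> * Wf X p m e \<omega>)) = 0" using R(2) by (simp add: mult.assoc)
qed

lemma pair_mom: assumes d: "d < D" and e: "e < D"
  shows "integrable M (\<lambda>\<omega>. sd X p d \<omega> * Wf X p m d \<omega> * (sd X p e \<omega> * Wf X p m e \<omega>))"
    "expectation (\<lambda>\<omega>. sd X p d \<omega> * Wf X p m d \<omega> * (sd X p e \<omega> * Wf X p m e \<omega>))
       = (if d = e then S * (real m / (real p * real n)) else 0)"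
proof -
  have eq: "(\<lambda>\<omega>. sd X p d \<omega> * Wf X p m d \<omega> * (sd X p d \<omega> * Wf X p m d \<omega>)) = (\<lambda>\<omega>. Qf d \<omega> * (Wf X p m d \<omega>)\<^sup>2)"
    by (rule ext, simp only: sd_sq[symmetric]) (simp add: power2_eq_square mult_ac)
  show "integrable M (\<lambda>\<omega>. sd X p d \<omega> * Wf X p m d \<omega> * (sd X p e \<omega> * Wf X p m e \<omega>))"
    using pair_ne[OF d e] QW_mom[OF d] eq by (cases "d = e") auto
  show "expectation (\<lambda>\<omega>. sd X p d \<omega> * Wf X p m d \<omega> * (sd X p e \<omega> * Wf X p m e \<omega>))
       = (if d = e then S * (real m / (real p * real n)) else 0)"
    using pair_ne[OF d e] QW_mom[OF d] eq by (cases "d = e") auto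
qed

end


context mi begin

abbreviation "af d \<omega> \<equiv> sd X p d \<omega> * Wf X p m d \<omega>"
definition "w = real m / (real p * real n)"
definition "E2 = ((real p - 1) * \<sigma>\<^sup>2 + S * real m) / (real n - 1)"

lemma lin3:
  fixes A B C :: "'a \<Rightarrow> real"
  assumes "integrable M A" "integrable M B" "integrable M C"
  shows "expectation (\<lambda>\<omega>. (A \<omega> + B \<omega> - c * C \<omega>) / k) = (expectation A + expectation B - c * expectation C) / k"
    "expectation (\<lambda>\<omega>. A \<omega> / k + c * (B \<omega> - C \<omega> / k')) = expectation A / k + c * (expectation B - expectation C / k')"
    "expectation (\<lambda>\<omega>. A \<omega> + c * B \<omega> + C \<omega> / k) = expectation A + c * expectation B + expectation C / k"
  using assms by (simp_all add: Bochner_Integration.integral_diff Bochner_Integration.integral_add)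

lemma s2SI_pw: "sigma2_SI X p m d \<omega> =
   (CSS X p \<omega> + Qf d \<omega> * Rf X p m d \<omega> - real n * (Qf d \<omega> * (Wf X p m d \<omega>)\<^sup>2)) / (real n - 1)"
  unfolding pw_sigma2_SI[OF p0] power_mult_distrib sd_sq ..

lemma s2SI_mom: assumes d: "d < D"
  shows "integrable M (sigma2_SI X p m d)" "expectation (sigma2_SI X p m d) = E2"
proof -
  have e: "sigma2_SI X p m d = (\<lambda>\<omega>. (CSS X p \<omega> + Qf d \<omega> * Rf X p m d \<omega> - real n * (Qf d \<omega> * (Wf X p m d \<omega>)\<^sup>2)) / (real n - 1))"
    by (rule ext) (rule s2SI_pw)
  note i = CSS_mom(1) QR_mom(1)[OF d] QW_mom(1)[OF d]
  show "integrable M (sigma2_SI X p m d)" unfolding e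
    by (intro integrable_divide_zero Bochner_Integration.integrable_diff Bochner_Integration.integrable_add integrable_mult_right i)
  have "expectation (sigma2_SI X p m d) =
      ((real p - 1) * \<sigma>\<^sup>2 + S * (real m * (1 / real p + 1)) - real n * (S * (real m / (real p * real n)))) / (real n - 1)"
    unfolding e lin3(1)[OF i] CSS_mom(2) QR_mom(2)[OF d] QW_mom(2)[OF d] ..
  also have "\<dots> = E2"
  proof -
    have g: "x * (S * (real m / (real p * x))) = S * real m / real p" if "x \<noteq> 0" for x :: real
      using p0 that by (simp add: field_simps)
    have "real n * (S * (real m / (real p * real n))) = S * real m / real p" by (rule g) (use p0 in simp)
    moreover have "S * (real m * (1 / real p + 1)) - S * real m / real p = S * real m" using p0 by (simp add: field_simps)
    ultimately show ?thesis by (simp add: E2_def)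
  qed
  finally show "expectation (sigma2_SI X p m d) = E2" .
qed

lemma s2MI_mom: "integrable M (sigma2_MI X p m D)" "expectation (sigma2_MI X p m D) = E2"
proof -
  have e: "sigma2_MI X p m D = (\<lambda>\<omega>. (\<Sum>d<D. sigma2_SI X p m d \<omega>) / real D)"
    by (rule ext) (simp add: sigma2_MI_def)
  show "integrable M (sigma2_MI X p m D)" unfolding e
    by (intro integrable_divide_zero Bochner_Integration.integrable_sum s2SI_mom(1)) auto
  have "expectation (sigma2_MI X p m D) = (\<Sum>d<D. E2) / real D"
    unfolding e using s2SI_mom by (simp add: Bochner_Integration.integral_sum)
  then show "expectation (sigma2_MI X p m D) = E2" using D0 by simp
qed

lemma asum_mom: "integrable M (\<lambda>\<omega>. \<Sum>d<D. af d \<omega>)" "expectation (\<lambda>\<omega>. \<Sum>d<D. af d \<omega>) = 0"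
  using a_mean by (auto simp: Bochner_Integration.integral_sum)

lemma asq_pw: "(\<Sum>d<D. af d \<omega>)\<^sup>2 = (\<Sum>d<D. \<Sum>e<D. af d \<omega> * af e \<omega>)"
  by (simp add: power2_eq_square sum_product)

lemma asq_mom: "integrable M (\<lambda>\<omega>. (\<Sum>d<D. af d \<omega>)\<^sup>2)"
    "expectation (\<lambda>\<omega>. (\<Sum>d<D. af d \<omega>)\<^sup>2) = real D * (S * w)"
proof -
  show "integrable M (\<lambda>\<omega>. (\<Sum>d<D. af d \<omega>)\<^sup>2)" unfolding asq_pw
    by (intro Bochner_Integration.integrable_sum pair_mom(1)) auto
  have "expectation (\<lambda>\<omega>. (\<Sum>d<D. af d \<omega>)\<^sup>2) = (\<Sum>d<D. \<Sum>e<D. expectation (\<lambda>\<omega>. af d \<omega> * af e \<omega>))"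
    unfolding asq_pw
    by (subst Bochner_Integration.integral_sum, fastforce intro!: Bochner_Integration.integrable_sum pair_mom(1))
       (intro sum.cong refl, subst Bochner_Integration.integral_sum, auto intro!: pair_mom(1))
  also have "\<dots> = (\<Sum>d<D. \<Sum>e<D. (if d = e then S * w else 0))"
    by (intro sum.cong refl) (simp add: pair_mom(2) w_def)
  also have "\<dots> = real D * (S * w)" by (simp add: sum.delta)
  finally show "expectation (\<lambda>\<omega>. (\<Sum>d<D. af d \<omega>)\<^sup>2) = real D * (S * w)" .
qed

lemma adiag_mom: "integrable M (\<lambda>\<omega>. \<Sum>d<D. (af d \<omega>)\<^sup>2)"
    "expectation (\<lambda>\<omega>. \<Sum>d<D. (af d \<omega>)\<^sup>2) = real D * (S * w)"
proof -
  have e: "(\<lambda>\<omega>. \<Sum>d<D. (af d \<omega>)\<^sup>2) = (\<lambda>\<omega>. \<Sum>d<D. af d \<omega> * af d \<omega>)" by (simp add: power2_eq_square)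
  show "integrable M (\<lambda>\<omega>. \<Sum>d<D. (af d \<omega>)\<^sup>2)" unfolding e
    by (intro Bochner_Integration.integrable_sum pair_mom(1)) auto
  show "expectation (\<lambda>\<omega>. \<Sum>d<D. (af d \<omega>)\<^sup>2) = real D * (S * w)"
    unfolding e using pair_mom by (simp add: Bochner_Integration.integral_sum w_def)
qed

lemma V_pw: "V_Rubin X p m D \<omega> = sigma2_MI X p m D \<omega> / real n +
   (real D + 1) / (real D * (real D - 1)) * ((\<Sum>d<D. (af d \<omega>)\<^sup>2) - (\<Sum>d<D. af d \<omega>)\<^sup>2 / real D)"
  unfolding V_Rubin_def pw_between[OF p0 D0] ..

lemma V_mom: "integrable M (V_Rubin X p m D)"
   "expectation (V_Rubin X p m D) = E2 / real n + (real D + 1) / (real D * (real D - 1)) * (real D * (S * w) - real D * (S * w) / real D)"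
proof -
  have e: "V_Rubin X p m D = (\<lambda>\<omega>. sigma2_MI X p m D \<omega> / real n +
   (real D + 1) / (real D * (real D - 1)) * ((\<Sum>d<D. (af d \<omega>)\<^sup>2) - (\<Sum>d<D. af d \<omega>)\<^sup>2 / real D))"
    by (rule ext) (rule V_pw)
  note i = s2MI_mom(1) adiag_mom(1) asq_mom(1)
  show "integrable M (V_Rubin X p m D)" unfolding e using i by auto
  show "expectation (V_Rubin X p m D) = E2 / real n + (real D + 1) / (real D * (real D - 1)) * (real D * (S * w) - real D * (S * w) / real D)"
    unfolding e lin3(2)[OF i] s2MI_mom(2) adiag_mom(2) asq_mom(2) ..
qed

lemma muMI_pw: "mu_MI X p m D \<omega> = Ybar_obs X p \<omega> + (\<Sum>d<D. af d \<omega>) / real D"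
  by (rule pw_mu_MI[OF p0 D0])

lemma muMI_sq: "(mu_MI X p m D \<omega>)\<^sup>2 = (Ybar_obs X p \<omega>)\<^sup>2 + 2 / real D * (\<Sum>d<D. Ybar_obs X p \<omega> * af d \<omega>)
   + (\<Sum>d<D. af d \<omega>)\<^sup>2 / (real D)\<^sup>2"
proof -
  have s: "(\<Sum>d<D. Ybar_obs X p \<omega> * af d \<omega>) = Ybar_obs X p \<omega> * (\<Sum>d<D. af d \<omega>)"
    by (simp add: sum_distrib_left)
  have g: "(y + A / DD)\<^sup>2 = y\<^sup>2 + 2 / DD * (y * A) + A\<^sup>2 / DD\<^sup>2" if "DD \<noteq> 0" for y A DD :: real
    using that by (simp add: power2_eq_square field_simps)
  show ?thesis unfolding muMI_pw s using D0 by (intro g) simp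
qed

lemma muMI_mom: "integrable M (mu_MI X p m D)" "integrable M (\<lambda>\<omega>. (mu_MI X p m D \<omega>)\<^sup>2)"
  "expectation (mu_MI X p m D) = \<mu>"
  "expectation (\<lambda>\<omega>. (mu_MI X p m D \<omega>)\<^sup>2) = \<mu>\<^sup>2 + \<sigma>\<^sup>2 / real p + real D * (S * w) / (real D)\<^sup>2"
proof -
  have e1: "mu_MI X p m D = (\<lambda>\<omega>. Ybar_obs X p \<omega> + (\<Sum>d<D. af d \<omega>) / real D)" by (rule ext) (rule muMI_pw)
  have e2: "(\<lambda>\<omega>. (mu_MI X p m D \<omega>)\<^sup>2) = (\<lambda>\<omega>. (Ybar_obs X p \<omega>)\<^sup>2 + 2 / real D * (\<Sum>d<D. Ybar_obs X p \<omega> * af d \<omega>)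
   + (\<Sum>d<D. af d \<omega>)\<^sup>2 / (real D)\<^sup>2)" by (rule ext) (rule muMI_sq)
  have ys: "integrable M (\<lambda>\<omega>. \<Sum>d<D. Ybar_obs X p \<omega> * af d \<omega>)" "expectation (\<lambda>\<omega>. \<Sum>d<D. Ybar_obs X p \<omega> * af d \<omega>) = 0"
    using Ya by (auto simp: Bochner_Integration.integral_sum)
  show "integrable M (mu_MI X p m D)" unfolding e1 using Yb_mom asum_mom by auto
  show "expectation (mu_MI X p m D) = \<mu>" unfolding e1 using Yb_mom asum_mom by simp
  show "integrable M (\<lambda>\<omega>. (mu_MI X p m D \<omega>)\<^sup>2)" unfolding e2 using Yb_mom ys asq_mom by auto
  show "expectation (\<lambda>\<omega>. (mu_MI X p m D \<omega>)\<^sup>2) = \<mu>\<^sup>2 + \<sigma>\<^sup>2 / real p + real D * (S * w) / (real D)\<^sup>2"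
    unfolding e2 lin3(3)[OF Yb_mom(3) ys(1) asq_mom(1)] Yb_mom(4) ys(2) asq_mom(2) by simp
qed

end

lemma alg1:
  fixes P N q s :: real
  assumes "P > 0" "q > 0" "N > 1"
  shows "((P - 1) * s + (P - 1) * s / q * (N - P)) / (N - 1) / N
      + (P - 1) * s / q * ((N - P) / (P * N)) - s / P
    = - s * ((N - P) * (N + P - 1) * (q - P + 1)) / ((N - 1) * N * P * q)"
proof -
  have a: "N - 1 \<noteq> 0" "N \<noteq> 0" "P \<noteq> 0" "q \<noteq> 0" using assms by auto
  show ?thesis using a by (simp add: field_simps)
qed

lemma alg2:
  fixes P N q s :: real
  assumes "P > 0" "q > 0" "N > 1"
  shows "- s * ((N - P) * (N + P - 1) * (q - P + 1)) / ((N - 1) * N * P * q)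
    = (N + P - 1) / (N * P) * (((P - 1) * s + (P - 1) * s / q * (N - P)) / (N - 1) - s)"
proof -
  have a: "N - 1 \<noteq> 0" "N \<noteq> 0" "P \<noteq> 0" "q \<noteq> 0" using assms by auto
  show ?thesis using a by (simp add: field_simps)
qed

lemma alg3:
  fixes DD x :: real
  assumes "DD > 1"
  shows "(DD + 1) / (DD * (DD - 1)) * (DD * x - DD * x / DD) - DD * x / DD\<^sup>2 = x"
proof -
  have a: "DD - 1 \<noteq> 0" "DD \<noteq> 0" using assms by auto
  show ?thesis using a by (simp add: field_simps power2_eq_square)
qed


context mi begin

lemma main:
  shows "integrable M (V_Rubin X p m D)
    \<and> integrable M (sigma2_MI X p m D)
    \<and> integrable M (\<lambda>\<omega>. (mu_MI X p m D \<omega>)\<^sup>2)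
    \<and> expectation (V_Rubin X p m D) - variance (mu_MI X p m D)
      = - \<sigma>\<^sup>2 * (real m * (real (p + m) + real p - 1) * (\<nu> - 2))
          / ((real (p + m) - 1) * real (p + m) * real p * (real p + \<nu> - 3))
    \<and> - \<sigma>\<^sup>2 * (real m * (real (p + m) + real p - 1) * (\<nu> - 2))
          / ((real (p + m) - 1) * real (p + m) * real p * (real p + \<nu> - 3))
      = (real (p + m) + real p - 1) / (real (p + m) * real p)
        * (expectation (sigma2_MI X p m D) - \<sigma>\<^sup>2)
    \<and> (expectation (V_Rubin X p m D) = variance (mu_MI X p m D) \<longleftrightarrow> \<nu> = 2)"
proof -
  define P where "P = real p"
  define N where "N = real (p + m)"
  define q where "q = real p + \<nu> - 3"
  have P: "P > 0" using p0 by (simp add: P_def)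
  have q: "q > 0" using nu3 by (simp add: q_def)
  have N: "N > 1" using p2 m1 by (simp add: N_def)
  have mN: "real m = N - P" by (simp add: N_def P_def)
  have nuq: "\<nu> - 2 = q - P + 1" by (simp add: q_def P_def)
  have Sq: "S = (P - 1) * \<sigma>\<^sup>2 / q" by (simp add: S_def P_def q_def)
  have wq: "w = (N - P) / (P * N)" by (simp add: w_def N_def P_def)
  have E2q: "E2 = ((P - 1) * \<sigma>\<^sup>2 + (P - 1) * \<sigma>\<^sup>2 / q * (N - P)) / (N - 1)"
    by (simp add: E2_def Sq N_def P_def)
  have Var: "variance (mu_MI X p m D) = \<sigma>\<^sup>2 / real p + real D * (S * w) / (real D)\<^sup>2"
    using variance_eq[OF muMI_mom(1,2)] muMI_mom(3,4) by simp
  have D1: "real D > 1" using D2 by simp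
  have "expectation (V_Rubin X p m D) - variance (mu_MI X p m D)
      = E2 / N + ((real D + 1) / (real D * (real D - 1)) * (real D * (S * w) - real D * (S * w) / real D)
          - real D * (S * w) / (real D)\<^sup>2) - \<sigma>\<^sup>2 / P"
    unfolding V_mom(2) Var by (simp add: N_def P_def)
  also have "\<dots> = E2 / N + S * w - \<sigma>\<^sup>2 / P" unfolding alg3[OF D1] ..
  also have "\<dots> = - \<sigma>\<^sup>2 * ((N - P) * (N + P - 1) * (q - P + 1)) / ((N - 1) * N * P * q)"
    unfolding E2q Sq wq by (rule alg1[OF P q N])
  finally have R1: "expectation (V_Rubin X p m D) - variance (mu_MI X p m D)
      = - \<sigma>\<^sup>2 * ((N - P) * (N + P - 1) * (q - P + 1)) / ((N - 1) * N * P * q)" .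
  have R2: "- \<sigma>\<^sup>2 * ((N - P) * (N + P - 1) * (q - P + 1)) / ((N - 1) * N * P * q)
     = (N + P - 1) / (N * P) * (expectation (sigma2_MI X p m D) - \<sigma>\<^sup>2)"
    unfolding s2MI_mom(2) E2q by (rule alg2[OF P q N])
  have RHS: "- \<sigma>\<^sup>2 * (real m * (real (p + m) + real p - 1) * (\<nu> - 2))
          / ((real (p + m) - 1) * real (p + m) * real p * (real p + \<nu> - 3))
     = - \<sigma>\<^sup>2 * ((N - P) * (N + P - 1) * (q - P + 1)) / ((N - 1) * N * P * q)"
    unfolding mN nuq by (simp add: N_def P_def q_def)
  have coef: "(real (p + m) + real p - 1) / (real (p + m) * real p) = (N + P - 1) / (N * P)"
    by (simp add: N_def P_def)
  have iff: "- \<sigma>\<^sup>2 * ((N - P) * (N + P - 1) * (q - P + 1)) / ((N - 1) * N * P * q) = 0 \<longleftrightarrow> \<nu> = 2"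
  proof -
    have nz: "(N - 1) * N * P * q \<noteq> 0" "N - P \<noteq> 0" "N + P - 1 \<noteq> 0" "\<sigma>\<^sup>2 \<noteq> 0"
      using P q N spos m1 mN by auto
    have "- \<sigma>\<^sup>2 * ((N - P) * (N + P - 1) * (q - P + 1)) / ((N - 1) * N * P * q) = 0 \<longleftrightarrow> q - P + 1 = 0"
      using nz by simp
    also have "\<dots> \<longleftrightarrow> \<nu> = 2" using nuq by linarith
    finally show ?thesis .
  qed
  have C: "expectation (V_Rubin X p m D) = variance (mu_MI X p m D) \<longleftrightarrow>
     expectation (V_Rubin X p m D) - variance (mu_MI X p m D) = 0" by linarith
  show ?thesis
    apply (intro conjI V_mom(1) s2MI_mom(1) muMI_mom(2))
    subgoal unfolding R1 RHS ..
    subgoal unfolding RHS coef R2 ..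
    subgoal unfolding C R1 iff ..
    done
qed

end

theorem mainTheorem6:
  fixes M :: "'a measure" and X :: "rv_label \<Rightarrow> 'a \<Rightarrow> real"
    and nobs nmis D :: nat and \<mu> \<sigma> \<nu>prior :: real
  assumes "prob_space M"
    and "nobs \<ge> 2" and "nmis \<ge> 1" and "D \<ge> 2"
    and "\<sigma> > 0"
    and "real nobs + \<nu>prior > 3"
    and "prob_space.indep_vars M (\<lambda>_. borel) X (rv_index nobs nmis D)"
    and "\<And>i. i < nobs \<Longrightarrow>
           distributed M lborel (X (Yobs i)) (\<lambda>x. ennreal (normal_density \<mu> \<sigma> x))"
    and "\<And>d. d < D \<Longrightarrow>
           distributed M lborel (X (Uchi d))
             (\<lambda>x. ennreal (chi_squared_density (\<nu>prior + real nobs - 1) x))"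
    and "\<And>d. d < D \<Longrightarrow>
           distributed M lborel (X (ZPD d)) (\<lambda>x. ennreal (normal_density 0 (1 / sqrt (real nobs)) x))"
    and "\<And>i d. nobs \<le> i \<Longrightarrow> i < nobs + nmis \<Longrightarrow> d < D \<Longrightarrow>
           distributed M lborel (X (Zimp i d)) (\<lambda>x. ennreal (normal_density 0 1 x))"
  shows "integrable M (V_Rubin X nobs nmis D)
    \<and> integrable M (sigma2_MI X nobs nmis D)
    \<and> integrable M (\<lambda>\<omega>. (mu_MI X nobs nmis D \<omega>)\<^sup>2)
    \<and> prob_space.expectation M (V_Rubin X nobs nmis D)
        - prob_space.variance M (mu_MI X nobs nmis D)
      = - \<sigma>\<^sup>2 * (real nmis * (real (nobs + nmis) + real nobs - 1) * (\<nu>prior - 2))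
          / ((real (nobs + nmis) - 1) * real (nobs + nmis) * real nobs * (real nobs + \<nu>prior - 3))
    \<and> - \<sigma>\<^sup>2 * (real nmis * (real (nobs + nmis) + real nobs - 1) * (\<nu>prior - 2))
          / ((real (nobs + nmis) - 1) * real (nobs + nmis) * real nobs * (real nobs + \<nu>prior - 3))
      = (real (nobs + nmis) + real nobs - 1) / (real (nobs + nmis) * real nobs)
        * (prob_space.expectation M (sigma2_MI X nobs nmis D) - \<sigma>\<^sup>2)
    \<and> (prob_space.expectation M (V_Rubin X nobs nmis D)
         = prob_space.variance M (mu_MI X nobs nmis D) \<longleftrightarrow> \<nu>prior = 2)"
proof -
  interpret mi M X nobs nmis D \<mu> \<sigma> \<nu>prior
    using assms by (simp add: mi_def mi_axioms_def)
  show ?thesis by (rule main)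
qed


end
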